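(* Let $p$ be an odd prime, let $G$ be a quasi-powerful $p$-group and let $H=G^{p}Z(G)$. Then $H$ is powerfully embedded in $G$, i.e. $[H,G]\le H^{p}$.
   Context: For an odd prime $p$, a finite $p$-group $G$ is powerful if $[G,G]\le G^{p}$ (where $G^{p}=\langle g^p\mid g\in G\rangle$), and $G$ is quasi-powerful if $G/Z(G)$ is powerful. A subgroup $N$ of $G$ is powerfully embedded in $G$ if $[N,G]\le N^{p}$. *)

theory Defs
  imports "HOL-Algebra.Algebra"
begin

definition center :: "('a, 'b) monoid_scheme \<Rightarrow> 'a set" where
  "center G = {z \<in> carrier G. \<forall>g \<in> carrier G. z \<otimes>\<^bsub>G\<^esub> g = g \<otimes>\<^bsub>G\<^esub> z}"

definition comm_subgroup :: "('a, 'b) monoid_scheme \<Rightarrow> 'a set \<Rightarrow> 'a set \<Rightarrow> 'a set" where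
  "comm_subgroup G A B = generate G
     {inv\<^bsub>G\<^esub> x \<otimes>\<^bsub>G\<^esub> inv\<^bsub>G\<^esub> y \<otimes>\<^bsub>G\<^esub> x \<otimes>\<^bsub>G\<^esub> y | x y. x \<in> A \<and> y \<in> B}"

definition pow_subgroup :: "('a, 'b) monoid_scheme \<Rightarrow> nat \<Rightarrow> 'a set \<Rightarrow> 'a set" where
  "pow_subgroup G p A = generate G {x [^]\<^bsub>G\<^esub> p | x. x \<in> A}"

definition p_group :: "('a, 'b) monoid_scheme \<Rightarrow> nat \<Rightarrow> bool" where
  "p_group G p \<longleftrightarrow> group G \<and> finite (carrier G) \<and> (\<exists>n. order G = p ^ n)"

definition powerful :: "('a, 'b) monoid_scheme \<Rightarrow> nat \<Rightarrow> bool" where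
  "powerful G p \<longleftrightarrow> comm_subgroup G (carrier G) (carrier G) \<subseteq> pow_subgroup G p (carrier G)"

definition quasi_powerful :: "('a, 'b) monoid_scheme \<Rightarrow> nat \<Rightarrow> bool" where
  "quasi_powerful G p \<longleftrightarrow> powerful (G Mod (center G)) p"

definition powerfully_embedded :: "('a, 'b) monoid_scheme \<Rightarrow> nat \<Rightarrow> 'a set \<Rightarrow> bool" where
  "powerfully_embedded G p N \<longleftrightarrow> comm_subgroup G N (carrier G) \<subseteq> pow_subgroup G p N"

end

theory Submission
  imports Defs
begin

lemma (in group) cancel1 [simp]:
  "x \<in> carrier G \<Longrightarrow> y \<in> carrier G \<Longrightarrow> x \<otimes> (inv x \<otimes> y) = y"
  by (simp add: m_assoc [symmetric])
lemma (in group) cancel2 [simp]: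
  "x \<in> carrier G \<Longrightarrow> y \<in> carrier G \<Longrightarrow> inv x \<otimes> (x \<otimes> y) = y"
  by (simp add: m_assoc [symmetric])

definition cm :: "('a, 'b) monoid_scheme \<Rightarrow> 'a \<Rightarrow> 'a \<Rightarrow> 'a" where
  "cm G x y = inv\<^bsub>G\<^esub> x \<otimes>\<^bsub>G\<^esub> inv\<^bsub>G\<^esub> y \<otimes>\<^bsub>G\<^esub> x \<otimes>\<^bsub>G\<^esub> y"

definition cent :: "('a, 'b) monoid_scheme \<Rightarrow> 'a set \<Rightarrow> 'a set" where
  "cent G K = {q \<in> carrier G. \<forall>g\<in>carrier G. cm G q g \<in> K}"

lemma (in group) cm_closed [simp]: "a \<in> carrier G \<Longrightarrow> b \<in> carrier G \<Longrightarrow> cm G a b \<in> carrier G"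
  by (simp add: cm_def)

lemma (in group) cm_one_iff:
  assumes a: "a \<in> carrier G" and b: "b \<in> carrier G"
  shows "cm G a b = \<one> \<longleftrightarrow> a \<otimes> b = b \<otimes> a"
proof -
  have e: "cm G a b = inv (b \<otimes> a) \<otimes> (a \<otimes> b)"
    using a b by (simp add: cm_def inv_mult_group m_assoc)
  show ?thesis
  proof
    assume "cm G a b = \<one>"
    then have "inv (b \<otimes> a) \<otimes> (a \<otimes> b) = \<one>" using e by simp
    then show "a \<otimes> b = b \<otimes> a" using a b by (metis inv_closed inv_equality inv_inv m_closed)
  next
    assume "a \<otimes> b = b \<otimes> a"
    then show "cm G a b = \<one>" using e a b by simp
  qed
qed

lemma (in group_hom) cm_hom:
  "x \<in> carrier G \<Longrightarrow> y \<in> carrier G \<Longrightarrow> h (cm G x y) = cm H (h x) (h y)"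
  by (simp add: cm_def)

lemma (in group) rcos_eq_iff:
  assumes K: "K \<lhd> G" and a: "a \<in> carrier G" and b: "b \<in> carrier G"
  shows "K #> a = K #> b \<longleftrightarrow> inv b \<otimes> a \<in> K"
proof -
  interpret N: normal K G by (rule K)
  show ?thesis
  proof
    assume e: "K #> a = K #> b"
    have "a \<in> K #> b" using e rcos_self[OF a N.subgroup_axioms] by simp
    then obtain k where k: "k \<in> K" "a = k \<otimes> b" unfolding r_coset_def by blast
    have "inv b \<otimes> k \<otimes> b \<in> K" using N.inv_op_closed1[OF b k(1)] .
    then show "inv b \<otimes> a \<in> K" using k b N.subset by (simp add: m_assoc subset_iff)
  next
    assume h: "inv b \<otimes> a \<in> K"
    have "b \<otimes> (inv b \<otimes> a) \<otimes> inv b \<in> K" using N.inv_op_closed2[OF b h] .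
    then have "a \<otimes> inv b \<in> K" using a b by (simp add: m_assoc)
    then have "a \<in> K #> b" using N.rcos_module_rev[OF is_group b a] by simp
    then show "K #> a = K #> b" using repr_independence[OF _ b N.subgroup_axioms] by simp
  qed
qed

lemma (in group) rcos_one_iff:
  assumes K: "K \<lhd> G" and a: "a \<in> carrier G"
  shows "K #> a = K \<longleftrightarrow> a \<in> K"
proof -
  interpret N: normal K G by (rule K)
  have "K #> \<one> = K" using N.subset by simp
  then show ?thesis using rcos_eq_iff[OF K a one_closed] a by simp
qed

lemma (in group) quot_hom:
  assumes K: "K \<lhd> G"
  shows "group_hom G (G Mod K) (\<lambda>a. K #> a)"
proof -
  interpret N: normal K G by (rule K)
  show ?thesis
    by (intro group_hom.intro is_group N.factorgroup_is_group group_hom_axioms.intro N.r_coset_hom_Mod)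
qed

lemma (in group) cm_in_iff:
  assumes K: "K \<lhd> G" and q: "q \<in> carrier G" and g: "g \<in> carrier G"
  shows "cm G q g \<in> K \<longleftrightarrow>
     (K #> q) \<otimes>\<^bsub>G Mod K\<^esub> (K #> g) = (K #> g) \<otimes>\<^bsub>G Mod K\<^esub> (K #> q)"
proof -
  interpret R: group_hom G "G Mod K" "\<lambda>a. K #> a" by (rule quot_hom[OF K])
  have "cm G q g \<in> K \<longleftrightarrow> K #> cm G q g = \<one>\<^bsub>G Mod K\<^esub>"
    using rcos_one_iff[OF K] q g by simp
  also have "\<dots> \<longleftrightarrow> cm (G Mod K) (K #> q) (K #> g) = \<one>\<^bsub>G Mod K\<^esub>"
    using R.cm_hom[OF q g] by simp
  also have "\<dots> \<longleftrightarrow> (K #> q) \<otimes>\<^bsub>G Mod K\<^esub> (K #> g) = (K #> g) \<otimes>\<^bsub>G Mod K\<^esub> (K #> q)"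
    using R.H.cm_one_iff q g by simp
  finally show ?thesis .
qed

lemma (in group) central_inv:
  assumes a: "a \<in> carrier G" and c: "\<forall>y\<in>carrier G. a \<otimes> y = y \<otimes> a"
  shows "\<forall>y\<in>carrier G. inv a \<otimes> y = y \<otimes> inv a"
proof
  fix y assume y: "y \<in> carrier G"
  have "inv a \<otimes> y = inv a \<otimes> (y \<otimes> a) \<otimes> inv a" using a y by (simp add: m_assoc)
  also have "\<dots> = inv a \<otimes> (a \<otimes> y) \<otimes> inv a" using c y by simp
  also have "\<dots> = y \<otimes> inv a" using a y by (simp add: m_assoc)
  finally show "inv a \<otimes> y = y \<otimes> inv a" .
qed

lemma (in group) central_conj:
  assumes a: "a \<in> carrier G" and g: "g \<in> carrier G" and c: "\<forall>y\<in>carrier G. a \<otimes> y = y \<otimes> a"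
  shows "g \<otimes> a \<otimes> inv g = a"
proof -
  have "g \<otimes> a \<otimes> inv g = a \<otimes> g \<otimes> inv g" using c g by simp
  also have "\<dots> = a" using a g by (simp add: m_assoc)
  finally show ?thesis .
qed

lemma (in group) central_mult:
  assumes a: "a \<in> carrier G" and b: "b \<in> carrier G"
    and ca: "\<forall>y\<in>carrier G. a \<otimes> y = y \<otimes> a" and cb: "\<forall>y\<in>carrier G. b \<otimes> y = y \<otimes> b"
  shows "\<forall>y\<in>carrier G. (a \<otimes> b) \<otimes> y = y \<otimes> (a \<otimes> b)"
proof
  fix y assume y: "y \<in> carrier G"
  have "(a \<otimes> b) \<otimes> y = a \<otimes> (y \<otimes> b)" using a b y cb by (simp add: m_assoc)
  also have "\<dots> = (a \<otimes> y) \<otimes> b" using a b y by (simp add: m_assoc)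
  also have "\<dots> = y \<otimes> (a \<otimes> b)" using a b y ca by (simp add: m_assoc)
  finally show "(a \<otimes> b) \<otimes> y = y \<otimes> (a \<otimes> b)" .
qed

lemma (in group) cent_char:
  assumes K: "K \<lhd> G"
  shows "q \<in> cent G K \<longleftrightarrow> q \<in> carrier G \<and>
    (\<forall>y\<in>carrier (G Mod K). (K #> q) \<otimes>\<^bsub>G Mod K\<^esub> y = y \<otimes>\<^bsub>G Mod K\<^esub> (K #> q))"
  unfolding cent_def using cm_in_iff[OF K] by (auto simp: carrier_FactGroup)

lemma (in group) cent_normal:
  assumes K: "K \<lhd> G"
  shows "cent G K \<lhd> G" and "K \<subseteq> cent G K"
proof -
  interpret R: group_hom G "G Mod K" "\<lambda>a. K #> a" by (rule quot_hom[OF K])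
  interpret N: normal K G by (rule K)
  let ?Q = "G Mod K"
  have rc: "K #> a \<in> carrier ?Q" if "a \<in> carrier G" for a
    using that by (simp add: carrier_FactGroup)
  have sub: "subgroup (cent G K) G"
  proof (rule subgroupI)
    show "cent G K \<subseteq> carrier G" unfolding cent_def by blast
    have "\<one> \<in> cent G K" unfolding cent_def using N.one_closed by (simp add: cm_def)
    then show "cent G K \<noteq> {}" by blast
  next
    fix a assume a: "a \<in> cent G K"
    then have ac: "a \<in> carrier G" and ca: "\<forall>y\<in>carrier ?Q. (K #> a) \<otimes>\<^bsub>?Q\<^esub> y = y \<otimes>\<^bsub>?Q\<^esub> (K #> a)"
      using cent_char[OF K] by auto
    have "K #> inv a = inv\<^bsub>?Q\<^esub> (K #> a)" using R.hom_inv ac by simp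
    then show "inv a \<in> cent G K" using R.H.central_inv[OF rc[OF ac] ca] cent_char[OF K] ac by simp
  next
    fix a b assume a: "a \<in> cent G K" and b: "b \<in> cent G K"
    then have ac: "a \<in> carrier G" and ca: "\<forall>y\<in>carrier ?Q. (K #> a) \<otimes>\<^bsub>?Q\<^esub> y = y \<otimes>\<^bsub>?Q\<^esub> (K #> a)"
      and bc: "b \<in> carrier G" and cb: "\<forall>y\<in>carrier ?Q. (K #> b) \<otimes>\<^bsub>?Q\<^esub> y = y \<otimes>\<^bsub>?Q\<^esub> (K #> b)"
      using cent_char[OF K] by auto
    have "K #> (a \<otimes> b) = (K #> a) \<otimes>\<^bsub>?Q\<^esub> (K #> b)" using R.hom_mult ac bc by simp
    then show "a \<otimes> b \<in> cent G K"
      using R.H.central_mult[OF rc[OF ac] rc[OF bc] ca cb] cent_char[OF K] ac bc by simp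
  qed
  show "cent G K \<lhd> G" unfolding normal_inv_iff
  proof (intro conjI sub ballI)
    fix g a assume g: "g \<in> carrier G" and a: "a \<in> cent G K"
    then have ac: "a \<in> carrier G" and ca: "\<forall>y\<in>carrier ?Q. (K #> a) \<otimes>\<^bsub>?Q\<^esub> y = y \<otimes>\<^bsub>?Q\<^esub> (K #> a)"
      using cent_char[OF K] by auto
    have "K #> (g \<otimes> a \<otimes> inv g) = (K #> g) \<otimes>\<^bsub>?Q\<^esub> (K #> a) \<otimes>\<^bsub>?Q\<^esub> inv\<^bsub>?Q\<^esub> (K #> g)"
      using g ac by simp
    also have "\<dots> = K #> a" using R.H.central_conj[OF rc[OF ac] rc[OF g] ca] by simp
    finally show "g \<otimes> a \<otimes> inv g \<in> cent G K" using a ac g cent_char[OF K] by simp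
  qed
  show "K \<subseteq> cent G K"
  proof
    fix k assume k: "k \<in> K"
    then have kc: "k \<in> carrier G" using N.subset by blast
    have "cm G k g \<in> K" if g: "g \<in> carrier G" for g
    proof -
      have "inv k \<otimes> (inv g \<otimes> k \<otimes> g) \<in> K"
        using N.m_closed[OF N.m_inv_closed[OF k] N.inv_op_closed1[OF g k]] .
      then show ?thesis using kc g by (simp add: cm_def m_assoc)
    qed
    then show "k \<in> cent G K" unfolding cent_def using kc by blast
  qed
qed

lemma (in group) conj_pow:
  assumes "a \<in> carrier G" "b \<in> carrier G"
  shows "inv b \<otimes> a [^] (n::nat) \<otimes> b = (inv b \<otimes> a \<otimes> b) [^] n"
proof (induction n)
  case 0
  then show ?case using assms by simp
next
  case (Suc n)
  have "inv b \<otimes> a [^] Suc n \<otimes> b = (inv b \<otimes> a [^] n \<otimes> b) \<otimes> (inv b \<otimes> a \<otimes> b)"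
    using assms by (simp add: m_assoc)
  then show ?case using Suc assms by simp
qed

lemma (in group) central_pow:
  assumes d: "d \<in> carrier G" and dc: "\<And>y. y \<in> carrier G \<Longrightarrow> d \<otimes> y = y \<otimes> d"
    and y: "y \<in> carrier G"
  shows "d [^] (k::nat) \<otimes> y = y \<otimes> d [^] k"
proof (induction k)
  case 0 then show ?case using y by simp
next
  case (Suc k)
  have "d [^] Suc k \<otimes> y = d [^] k \<otimes> (d \<otimes> y)" using d y by (simp add: m_assoc)
  also have "\<dots> = (d [^] k \<otimes> y) \<otimes> d" using d y dc[OF y] by (simp add: m_assoc)
  also have "\<dots> = y \<otimes> d [^] Suc k" using Suc d y by (simp add: m_assoc)
  finally show ?case .
qed

lemma (in group) c_pow_a:
  assumes a: "a \<in> carrier G" and c: "c \<in> carrier G" and d: "d \<in> carrier G"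
    and ca: "c \<otimes> a = a \<otimes> c \<otimes> d" and dc: "\<And>y. y \<in> carrier G \<Longrightarrow> d \<otimes> y = y \<otimes> d"
  shows "c [^] (n::nat) \<otimes> a = a \<otimes> c [^] n \<otimes> d [^] n"
proof (induction n)
  case 0
  then show ?case using a by simp
next
  case (Suc n)
  have "c [^] Suc n \<otimes> a = c [^] n \<otimes> (c \<otimes> a)" using a c by (simp add: m_assoc nat_pow_Suc2)
  also have "\<dots> = (c [^] n \<otimes> a) \<otimes> (c \<otimes> d)" using a c d ca by (simp add: m_assoc)
  also have "\<dots> = a \<otimes> c [^] n \<otimes> (d [^] n \<otimes> c) \<otimes> d" using Suc a c d by (simp add: m_assoc)
  also have "\<dots> = a \<otimes> c [^] n \<otimes> (c \<otimes> d [^] n) \<otimes> d" using a c d central_pow[OF d dc c, of n]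
    by simp
  also have "\<dots> = a \<otimes> c [^] Suc n \<otimes> d [^] Suc n" using a c d by (simp add: m_assoc)
  finally show ?case .
qed

lemma tri_step: "n + n * (n - 1) div 2 = Suc n * (Suc n - 1) div 2"
proof -
  have "Suc n * (Suc n - 1) = n * (n - 1) + 2 * n" by (cases n) (auto simp: algebra_simps)
  then show ?thesis by simp
qed

lemma (in group) ac_pow:
  assumes a: "a \<in> carrier G" and c: "c \<in> carrier G" and d: "d \<in> carrier G"
    and ca: "c \<otimes> a = a \<otimes> c \<otimes> d" and dc: "\<And>y. y \<in> carrier G \<Longrightarrow> d \<otimes> y = y \<otimes> d"
  shows "(a \<otimes> c) [^] (n::nat) = a [^] n \<otimes> c [^] n \<otimes> d [^] (n * (n - 1) div 2)"
proof (induction n)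
  case 0
  then show ?case by simp
next
  case (Suc n)
  let ?T = "n * (n - 1) div 2"
  have "(a \<otimes> c) [^] Suc n = a [^] n \<otimes> c [^] n \<otimes> d [^] ?T \<otimes> (a \<otimes> c)"
    using Suc by simp
  also have "\<dots> = a [^] n \<otimes> (c [^] n \<otimes> a) \<otimes> c \<otimes> d [^] ?T"
    using a c d central_pow[OF d dc, of "a \<otimes> c" ?T] by (simp add: m_assoc)
  also have "\<dots> = a [^] n \<otimes> a \<otimes> c [^] n \<otimes> c \<otimes> (d [^] n \<otimes> d [^] ?T)"
    using a c d c_pow_a[OF a c d ca dc, of n] central_pow[OF d dc c, of n]
    by (simp add: m_assoc)
  also have "\<dots> = a [^] Suc n \<otimes> c [^] Suc n \<otimes> d [^] (Suc n * (Suc n - 1) div 2)"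
    using a c d by (simp only: tri_step[symmetric]) (simp add: m_assoc nat_pow_mult)
  finally show ?case .
qed

lemma (in group) key_comm:
  assumes a: "a \<in> carrier G" and b: "b \<in> carrier G" and p: "odd p"
    and c_def: "c = inv a \<otimes> inv b \<otimes> a \<otimes> b"
    and d_def: "d = inv c \<otimes> inv a \<otimes> c \<otimes> a"
    and dc: "\<And>y. y \<in> carrier G \<Longrightarrow> d \<otimes> y = y \<otimes> d"
    and cp: "c [^] (p::nat) = \<one>" and dp: "d [^] p = \<one>"
  shows "inv (a [^] p) \<otimes> inv b \<otimes> a [^] p \<otimes> b = \<one>"
proof -
  have c: "c \<in> carrier G" using a b c_def by simp
  have d: "d \<in> carrier G" using a c d_def by simp
  have ca: "c \<otimes> a = a \<otimes> c \<otimes> d" using a c d_def by (simp add: m_assoc)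
  have conj: "inv b \<otimes> a \<otimes> b = a \<otimes> c" using a b c_def by (simp add: m_assoc)
  obtain k where k: "p * (p - 1) div 2 = p * k"
  proof -
    from p obtain m where "p = 2 * m + 1" by (metis oddE)
    then have "p * (p - 1) div 2 = p * m" by simp
    then show ?thesis using that by blast
  qed
  have dT: "d [^] (p * (p - 1) div 2) = \<one>" using d dp k by (simp add: nat_pow_pow[symmetric])
  have "inv (a [^] p) \<otimes> inv b \<otimes> a [^] p \<otimes> b = inv (a [^] p) \<otimes> (inv b \<otimes> a [^] p \<otimes> b)"
    using a b by (simp add: m_assoc)
  also have "\<dots> = inv (a [^] p) \<otimes> (a \<otimes> c) [^] p" using conj_pow[OF a b, of p] conj by simp
  also have "\<dots> = \<one>" using ac_pow[OF a c d ca dc, of p] cp dT a by simp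
  finally show ?thesis .
qed


lemma (in group) pgroup_fixed:
  assumes fin: "finite (carrier G)" and ord: "order G = p ^ n" and pr: "Factorial_Ring.prime p"
    and K: "K \<lhd> G" and ne: "K \<noteq> carrier G"
  shows "\<exists>x\<in>carrier G. x \<notin> K \<and> (\<forall>g\<in>carrier G. inv x \<otimes> inv g \<otimes> x \<otimes> g \<in> K)"
proof -
  interpret N: normal K G by (rule K)
  define \<Phi> where "\<Phi> = (\<lambda>g. \<lambda>H \<in> {H. H \<subseteq> carrier G}. g <# H #> inv g)"
  interpret A: group_action G "{H. H \<subseteq> carrier G}" \<Phi>
    unfolding \<Phi>_def by (rule action_by_conjugation_on_power_set)
  have Ksub: "K \<subseteq> carrier G" by (rule N.subset)
  have conjc: "\<Phi> g (K #> x) = K #> (g \<otimes> x \<otimes> inv g)"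
    if g: "g \<in> carrier G" and x: "x \<in> carrier G" for g x
  proof -
    have "K #> x \<subseteq> carrier G" by (rule r_coset_subset_G[OF Ksub x])
    then have "\<Phi> g (K #> x) = g <# (K #> x) #> inv g" by (simp add: \<Phi>_def)
    also have "\<dots> = (g <# K) #> x #> inv g" using coset_assoc g x Ksub by simp
    also have "\<dots> = (K #> g) #> x #> inv g" using N.coset_eq g by simp
    also have "\<dots> = K #> (g \<otimes> x \<otimes> inv g)" by (simp add: coset_mult_assoc Ksub g x)
    finally show ?thesis .
  qed
  define EE where "EE = rcosets K"
  define FF where "FF = {U. U \<in> EE \<and> (\<forall>g\<in>carrier G. \<Phi> g U = U)}"
  have Eeq: "EE = (\<lambda>x. K #> x) ` carrier G" unfolding EE_def RCOSETS_def by auto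
  have finE: "finite EE" using fin Eeq by simp
  have EPow: "EE \<subseteq> {H. H \<subseteq> carrier G}" using Eeq r_coset_subset_G[OF Ksub] by auto
  have orbE: "orbit G \<Phi> U \<subseteq> EE" if "U \<in> EE" for U
  proof
    fix V assume "V \<in> orbit G \<Phi> U"
    then obtain g where g: "g \<in> carrier G" "V = \<Phi> g U" unfolding orbit_def by blast
    have "U \<in> (\<lambda>x. K #> x) ` carrier G" using that by (simp only: Eeq)
    then obtain x where x: "x \<in> carrier G" "U = K #> x" by blast
    have "V = K #> (g \<otimes> x \<otimes> inv g)" using g(2) x(2) conjc[OF g(1) x(1)] by simp
    then show "V \<in> EE" unfolding Eeq using g(1) x(1) by blast
  qed
  have KF: "K \<in> FF"
  proof -
    have "K #> \<one> \<in> (\<lambda>x. K #> x) ` carrier G" by blast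
    then have KE: "K \<in> EE" unfolding Eeq using coset_mult_one[OF Ksub] by simp
    have "\<Phi> g K = K" if "g \<in> carrier G" for g
      using conjc[OF that one_closed] coset_mult_one[OF Ksub] that by simp
    then show ?thesis using KE unfolding FF_def by blast
  qed
  have orb_dvd: "p dvd card (orbit G \<Phi> U)" if U: "U \<in> EE - FF" for U
  proof -
    have UP: "U \<in> {H. H \<subseteq> carrier G}" using U EPow by blast
    have "card (orbit G \<Phi> U) * card (stabilizer G \<Phi> U) = p ^ n"
      using A.orbit_stabilizer_theorem[OF UP] ord by simp
    then have "card (orbit G \<Phi> U) dvd p ^ n" by (metis dvd_triv_left)
    then obtain i where i: "card (orbit G \<Phi> U) = p ^ i" using divides_primepow_nat[OF pr] by blast
    have "i \<noteq> 0"
    proof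
      assume "i = 0"
      then have c1: "card (orbit G \<Phi> U) = 1" using i by simp
      have Uo: "U \<in> orbit G \<Phi> U" using A.orbit_refl[OF UP] .
      obtain g where g: "g \<in> carrier G" "\<Phi> g U \<noteq> U" using U unfolding FF_def by blast
      have "\<Phi> g U \<in> orbit G \<Phi> U" using g unfolding orbit_def by blast
      then show False using c1 Uo g(2) by (metis card_1_singletonE singletonD)
    qed
    then show ?thesis using i by (simp add: dvd_power)
  qed
  have orbF: "orbit G \<Phi> U \<subseteq> EE - FF" if U: "U \<in> EE - FF" for U
  proof
    fix V assume V: "V \<in> orbit G \<Phi> U"
    have UP: "U \<in> {H. H \<subseteq> carrier G}" using U EPow by blast
    have VE: "V \<in> EE" using orbE U V by blast
    then have VP: "V \<in> {H. H \<subseteq> carrier G}" using EPow by blast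
    show "V \<in> EE - FF"
    proof (rule ccontr)
      assume "V \<notin> EE - FF"
      then have VF: "V \<in> FF" using VE by blast
      have "U \<in> orbit G \<Phi> V" using A.orbit_sym[OF UP VP V] .
      then obtain g where "g \<in> carrier G" "U = \<Phi> g V" unfolding orbit_def by blast
      then have "U = V" using VF unfolding FF_def by auto
      then show False using U VF by blast
    qed
  qed
  define Orbs where "Orbs = (\<lambda>U. orbit G \<Phi> U) ` (EE - FF)"
  have UO: "\<Union>Orbs = EE - FF"
  proof
    show "\<Union>Orbs \<subseteq> EE - FF" using orbF unfolding Orbs_def by blast
    show "EE - FF \<subseteq> \<Union>Orbs"
    proof
      fix U assume U: "U \<in> EE - FF"
      then have "U \<in> orbit G \<Phi> U" using A.orbit_refl EPow by blast
      then show "U \<in> \<Union>Orbs" using U unfolding Orbs_def by blast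
    qed
  qed
  have disj: "pairwise disjnt Orbs"
  proof (rule pairwiseI)
    fix A B assume AO: "A \<in> Orbs" and BO: "B \<in> Orbs" and AB: "A \<noteq> B"
    have "A \<in> orbits G {H. H \<subseteq> carrier G} \<Phi>" "B \<in> orbits G {H. H \<subseteq> carrier G} \<Phi>"
      using AO BO EPow unfolding Orbs_def orbits_def by blast+
    then show "disjnt A B" using A.disjoint_union AB unfolding disjnt_def by blast
  qed
  have finO: "finite A" if AOr: "A \<in> Orbs" for A
  proof -
    obtain U where "U \<in> EE - FF" "A = orbit G \<Phi> U" using AOr unfolding Orbs_def by blast
    then have "A \<subseteq> EE" using orbF by blast
    then show ?thesis using finE finite_subset by blast
  qed
  have "card (EE - FF) = sum card Orbs" using card_Union_disjoint[OF disj finO] UO by simp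
  moreover have "\<forall>A\<in>Orbs. p dvd card A" using orb_dvd unfolding Orbs_def by blast
  ultimately have pEF: "p dvd card (EE - FF)" by (simp add: dvd_sum)
  have pE: "p dvd card EE"
  proof -
    have "card EE * card K = p ^ n" using lagrange[OF N.subgroup_axioms] ord EE_def by simp
    then have "card EE dvd p ^ n" by (metis dvd_triv_left)
    then obtain i where i: "card EE = p ^ i" using divides_primepow_nat[OF pr] by blast
    have "i \<noteq> 0"
    proof
      assume "i = 0"
      then have "card K = card (carrier G)"
        using i lagrange[OF N.subgroup_axioms] EE_def by (simp add: order_def)
      then show False using ne Ksub fin by (metis card_subset_eq)
    qed
    then show ?thesis using i by (simp add: dvd_power)
  qed
  have FE: "FF \<subseteq> EE" unfolding FF_def by blast
  have "card EE = card FF + card (EE - FF)"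
    using FE finE by (metis card_Diff_subset card_mono le_add_diff_inverse finite_subset)
  then have pF: "p dvd card FF" using pE pEF by (metis dvd_add_left_iff)
  have finF: "finite FF" using FE finE finite_subset by blast
  have "card FF \<noteq> 0" using KF finF by auto
  then have "card FF \<ge> p" using pF by (simp add: dvd_imp_le)
  moreover have "p \<ge> 2" using pr by (simp add: prime_ge_2_nat)
  ultimately have "\<not> FF \<subseteq> {K}"
  proof (intro notI)
    assume "FF \<subseteq> {K}"
    then have "card FF \<le> card {K}" by (intro card_mono) auto
    then show False using \<open>card FF \<ge> p\<close> \<open>p \<ge> 2\<close> by simp
  qed
  then obtain U where UF: "U \<in> FF" and UK: "U \<noteq> K" by blast
  have "U \<in> (\<lambda>x. K #> x) ` carrier G" using UF FE by (simp only: Eeq subset_iff)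
  then obtain x where x: "x \<in> carrier G" "U = K #> x" by blast
  have xK: "x \<notin> K" using UK x N.rcos_const[OF is_group] by blast
  have "inv x \<otimes> inv g \<otimes> x \<otimes> g \<in> K" if g: "g \<in> carrier G" for g
  proof -
    have "\<Phi> (inv g) U = U" using UF g unfolding FF_def by simp
    then have "K #> (inv g \<otimes> x \<otimes> g) = K #> x" using conjc[of "inv g" x] x g by simp
    then have "inv g \<otimes> x \<otimes> g \<in> K #> x" using rcos_self[of "inv g \<otimes> x \<otimes> g" K] x g N.subgroup_axioms
      by simp
    then have h: "inv g \<otimes> x \<otimes> g \<otimes> inv x \<in> K" using N.rcos_module_imp[OF is_group] x by blast
    have "inv x \<otimes> (inv g \<otimes> x \<otimes> g \<otimes> inv x) \<otimes> x \<in> K" using N.inv_op_closed1[OF x(1) h] .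
    then show ?thesis using x g by (simp add: m_assoc)
  qed
  then show ?thesis using x xK by blast
qed


lemma (in group) key_step:
  assumes K: "K \<lhd> G" and p: "odd p" and Hc: "H \<subseteq> carrier G"
    and MK: "\<And>h. h \<in> H \<Longrightarrow> h [^] p \<in> K"
    and HG: "\<And>x y. x \<in> carrier G \<Longrightarrow> y \<in> carrier G \<Longrightarrow> cm G x y \<in> H"
    and L: "\<And>h g g'. h \<in> H \<Longrightarrow> g \<in> carrier G \<Longrightarrow> g' \<in> carrier G \<Longrightarrow> cm G (cm G h g) g' \<in> K"
    and x: "x \<in> carrier G" and g: "g \<in> carrier G"
  shows "cm G (x [^] (p::nat)) g \<in> K"
proof -
  interpret R: group_hom G "G Mod K" "\<lambda>a. K #> a" by (rule quot_hom[OF K])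
  let ?Q = "G Mod K"
  have rc: "K #> a \<in> carrier ?Q" if "a \<in> carrier G" for a
    using that by (simp add: carrier_FactGroup)
  define a where "a = K #> x"
  define b where "b = K #> g"
  define c where "c = K #> cm G x g"
  define d where "d = K #> cm G (cm G x g) x"
  have a: "a \<in> carrier ?Q" and b: "b \<in> carrier ?Q" using rc x g a_def b_def by auto
  have cdef: "c = inv\<^bsub>?Q\<^esub> a \<otimes>\<^bsub>?Q\<^esub> inv\<^bsub>?Q\<^esub> b \<otimes>\<^bsub>?Q\<^esub> a \<otimes>\<^bsub>?Q\<^esub> b"
    using R.cm_hom[OF x g] unfolding a_def b_def c_def cm_def[of ?Q] by simp
  have ddef: "d = inv\<^bsub>?Q\<^esub> c \<otimes>\<^bsub>?Q\<^esub> inv\<^bsub>?Q\<^esub> a \<otimes>\<^bsub>?Q\<^esub> c \<otimes>\<^bsub>?Q\<^esub> a"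
    using R.cm_hom[OF cm_closed[OF x g] x] unfolding a_def c_def d_def cm_def[of ?Q] by simp
  have hxg: "cm G x g \<in> H" using HG x g .
  have dc: "d \<otimes>\<^bsub>?Q\<^esub> y = y \<otimes>\<^bsub>?Q\<^esub> d" if y: "y \<in> carrier ?Q" for y
  proof -
    obtain y' where y': "y' \<in> carrier G" "y = K #> y'" using y by (auto simp: carrier_FactGroup)
    have "cm G (cm G (cm G x g) x) y' \<in> K" using L[OF hxg x y'(1)] .
    then show ?thesis using cm_in_iff[OF K cm_closed[OF cm_closed[OF x g] x] y'(1)] y'(2) d_def by simp
  qed
  have cp: "c [^]\<^bsub>?Q\<^esub> p = \<one>\<^bsub>?Q\<^esub>"
  proof -
    have "c [^]\<^bsub>?Q\<^esub> p = K #> (cm G x g [^] p)" using R.hom_nat_pow[OF cm_closed[OF x g]] c_def by simp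
    also have "\<dots> = K" using rcos_one_iff[OF K] MK[OF hxg] x g by simp
    finally show ?thesis by simp
  qed
  have dp: "d [^]\<^bsub>?Q\<^esub> p = \<one>\<^bsub>?Q\<^esub>"
  proof -
    have h2: "cm G (cm G x g) x \<in> H" using HG cm_closed[OF x g] x .
    have "d [^]\<^bsub>?Q\<^esub> p = K #> (cm G (cm G x g) x [^] p)"
      using R.hom_nat_pow[OF cm_closed[OF cm_closed[OF x g] x]] d_def by simp
    also have "\<dots> = K" using rcos_one_iff[OF K] MK[OF h2] x g by simp
    finally show ?thesis by simp
  qed
  have "inv\<^bsub>?Q\<^esub> (a [^]\<^bsub>?Q\<^esub> p) \<otimes>\<^bsub>?Q\<^esub> inv\<^bsub>?Q\<^esub> b \<otimes>\<^bsub>?Q\<^esub> a [^]\<^bsub>?Q\<^esub> p \<otimes>\<^bsub>?Q\<^esub> b = \<one>\<^bsub>?Q\<^esub>"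
    by (rule R.H.key_comm[OF a b p cdef ddef dc cp dp])
  moreover have "K #> cm G (x [^] p) g = inv\<^bsub>?Q\<^esub> (a [^]\<^bsub>?Q\<^esub> p) \<otimes>\<^bsub>?Q\<^esub> inv\<^bsub>?Q\<^esub> b \<otimes>\<^bsub>?Q\<^esub> a [^]\<^bsub>?Q\<^esub> p \<otimes>\<^bsub>?Q\<^esub> b"
    using R.cm_hom[OF nat_pow_closed[OF x] g] R.hom_nat_pow[OF x] unfolding a_def b_def cm_def[of ?Q] by simp
  ultimately have "K #> cm G (x [^] p) g = K" by simp
  then show ?thesis using rcos_one_iff[OF K] x g by simp
qed

lemma (in group) center_normal: "center G \<lhd> G"
  and center_central: "z \<in> center G \<Longrightarrow> z \<in> carrier G \<and> (\<forall>g\<in>carrier G. z \<otimes> g = g \<otimes> z)"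
proof -
  have sub: "subgroup (center G) G"
  proof (rule subgroupI)
    show "center G \<subseteq> carrier G" unfolding center_def by blast
    show "center G \<noteq> {}" unfolding center_def using one_closed by force
  next
    fix a assume a: "a \<in> center G"
    then have ac: "a \<in> carrier G" and ca: "\<forall>y\<in>carrier G. a \<otimes> y = y \<otimes> a" unfolding center_def by blast+
    show "inv a \<in> center G" using central_inv[OF ac ca] ac unfolding center_def by blast
  next
    fix a b assume a: "a \<in> center G" and b: "b \<in> center G"
    then have ac: "a \<in> carrier G" and ca: "\<forall>y\<in>carrier G. a \<otimes> y = y \<otimes> a"
      and bc: "b \<in> carrier G" and cb: "\<forall>y\<in>carrier G. b \<otimes> y = y \<otimes> b" unfolding center_def by blast+
    show "a \<otimes> b \<in> center G" using central_mult[OF ac bc ca cb] ac bc unfolding center_def by blast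
  qed
  show "center G \<lhd> G" unfolding normal_inv_iff
  proof (intro conjI sub ballI)
    fix g z assume g: "g \<in> carrier G" and z: "z \<in> center G"
    then have zc: "z \<in> carrier G" and cz: "\<forall>y\<in>carrier G. z \<otimes> y = y \<otimes> z" unfolding center_def by blast+
    have "g \<otimes> z \<otimes> inv g = z" using central_conj[OF zc g cz] .
    then show "g \<otimes> z \<otimes> inv g \<in> center G" using z by simp
  qed
  show "z \<in> center G \<Longrightarrow> z \<in> carrier G \<and> (\<forall>g\<in>carrier G. z \<otimes> g = g \<otimes> z)"
    unfolding center_def by blast
qed

lemma (in group) pow_subgroup_normal:
  assumes S: "S \<subseteq> carrier G" and conj: "\<And>s g. s \<in> S \<Longrightarrow> g \<in> carrier G \<Longrightarrow> g \<otimes> s \<otimes> inv g \<in> S"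
  shows "pow_subgroup G p S \<lhd> G"
  unfolding pow_subgroup_def
proof (rule normal_generateI)
  show "{x [^] p |x. x \<in> S} \<subseteq> carrier G" using S by auto
next
  fix h g assume h: "h \<in> {x [^] p |x. x \<in> S}" and g: "g \<in> carrier G"
  then obtain x where x: "x \<in> S" "h = x [^] p" by blast
  have xc: "x \<in> carrier G" using x S by blast
  have "g \<otimes> h \<otimes> inv g = (g \<otimes> x \<otimes> inv g) [^] p"
    using conj_pow[OF xc inv_closed[OF g], of p] x g by simp
  then show "g \<otimes> h \<otimes> inv g \<in> {x [^] p |x. x \<in> S}" using conj[OF x(1) g] by blast
qed

theorem proposition3p6:
  fixes G (structure) and p :: nat
  assumes "Factorial_Ring.prime p" and "odd p"
    and "p_group G p"
    and "quasi_powerful G p"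
  shows "powerfully_embedded G p (pow_subgroup G p (carrier G) <#> center G)"
proof -
  note pr = assms(1) and podd = assms(2)
  obtain n where grp: "group G" and fin: "finite (carrier G)" and ord: "order G = p ^ n"
    using assms(3) unfolding p_group_def by blast
  interpret group G by (rule grp)
  define S where "S = {x [^] p | x. x \<in> carrier G}"
  define P where "P = pow_subgroup G p (carrier G)"
  define Z where "Z = center G"
  define H where "H = P <#> Z"
  define M where "M = pow_subgroup G p H"
  have PS: "P = generate G S" unfolding P_def S_def pow_subgroup_def by simp
  have Sc: "S \<subseteq> carrier G" unfolding S_def by auto
  have Pn: "P \<lhd> G" unfolding P_def by (rule pow_subgroup_normal) auto
  have Psub: "P \<subseteq> carrier G" using Pn normal_imp_subgroup subgroup.subset by blast
  have Zn: "Z \<lhd> G" unfolding Z_def by (rule center_normal)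
  have Zc: "z \<in> carrier G" "g \<in> carrier G \<Longrightarrow> z \<otimes> g = g \<otimes> z" if "z \<in> Z" for z g
    using center_central that unfolding Z_def by auto
  have Hmem: "h \<in> H \<longleftrightarrow> (\<exists>q\<in>P. \<exists>z\<in>Z. h = q \<otimes> z)" for h
    unfolding H_def set_mult_def by blast
  have Hc: "H \<subseteq> carrier G"
  proof
    fix h assume "h \<in> H"
    then obtain q z where "q \<in> P" "z \<in> Z" "h = q \<otimes> z" using Hmem by blast
    then show "h \<in> carrier G" using Psub Zc(1) by blast
  qed
  have Hconj: "g \<otimes> h \<otimes> inv g \<in> H" if h: "h \<in> H" and g: "g \<in> carrier G" for h g
  proof -
    obtain q z where qz: "q \<in> P" "z \<in> Z" "h = q \<otimes> z" using h Hmem by blast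
    have qc: "q \<in> carrier G" using qz Psub by blast
    have zc: "z \<in> carrier G" using Zc qz by blast
    have "g \<otimes> h \<otimes> inv g = g \<otimes> q \<otimes> (z \<otimes> inv g)" using qz qc zc g by (simp add: m_assoc)
    also have "\<dots> = (g \<otimes> q \<otimes> inv g) \<otimes> z" using Zc(2)[OF qz(2) inv_closed[OF g]] qc zc g
      by (simp add: m_assoc)
    finally show ?thesis using Hmem normal.inv_op_closed2[OF Pn g qz(1)] qz(2) by blast
  qed
  have Mn: "M \<lhd> G" unfolding M_def by (rule pow_subgroup_normal[OF Hc Hconj])
  have MK: "h [^] p \<in> M" if "h \<in> H" for h
    unfolding M_def pow_subgroup_def using that by (intro generate.incl) blast
  have HG: "cm G x y \<in> H" if x: "x \<in> carrier G" and y: "y \<in> carrier G" for x y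
  proof -
    interpret R: group_hom G "G Mod Z" "\<lambda>a. Z #> a" by (rule quot_hom[OF Zn])
    let ?Q = "G Mod Z"
    have qp: "comm_subgroup ?Q (carrier ?Q) (carrier ?Q) \<subseteq> pow_subgroup ?Q p (carrier ?Q)"
      using assms(4) unfolding quasi_powerful_def powerful_def Z_def by simp
    have rc: "Z #> a \<in> carrier ?Q" if "a \<in> carrier G" for a
      using that by (simp add: carrier_FactGroup)
    have "cm ?Q (Z #> x) (Z #> y) \<in> comm_subgroup ?Q (carrier ?Q) (carrier ?Q)"
      unfolding comm_subgroup_def cm_def using rc[OF x] rc[OF y] by (intro generate.incl) blast
    moreover have "Z #> cm G x y = cm ?Q (Z #> x) (Z #> y)" by (rule R.cm_hom[OF x y])
    ultimately have "Z #> cm G x y \<in> pow_subgroup ?Q p (carrier ?Q)" using qp by (simp only:) blast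
    moreover have "{u [^]\<^bsub>?Q\<^esub> p | u. u \<in> carrier ?Q} = (\<lambda>a. Z #> a) ` S"
    proof
      show "{u [^]\<^bsub>?Q\<^esub> p | u. u \<in> carrier ?Q} \<subseteq> (\<lambda>a. Z #> a) ` S"
      proof
        fix v assume "v \<in> {u [^]\<^bsub>?Q\<^esub> p | u. u \<in> carrier ?Q}"
        then obtain u where u: "u \<in> carrier ?Q" "v = u [^]\<^bsub>?Q\<^esub> p" by blast
        obtain a where a: "a \<in> carrier G" "u = Z #> a" using u(1) by (auto simp: carrier_FactGroup)
        have "v = Z #> (a [^] p)" using R.hom_nat_pow[OF a(1)] u a by simp
        then show "v \<in> (\<lambda>a. Z #> a) ` S" unfolding S_def using a(1) by blast
      qed
      show "(\<lambda>a. Z #> a) ` S \<subseteq> {u [^]\<^bsub>?Q\<^esub> p | u. u \<in> carrier ?Q}"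
      proof
        fix v assume "v \<in> (\<lambda>a. Z #> a) ` S"
        then obtain a where a: "a \<in> carrier G" "v = Z #> (a [^] p)" unfolding S_def by blast
        have "v = (Z #> a) [^]\<^bsub>?Q\<^esub> p" using R.hom_nat_pow[OF a(1)] a by simp
        then show "v \<in> {u [^]\<^bsub>?Q\<^esub> p | u. u \<in> carrier ?Q}" using rc[OF a(1)] by blast
      qed
    qed
    ultimately have "Z #> cm G x y \<in> (\<lambda>a. Z #> a) ` P"
      unfolding pow_subgroup_def PS using R.generate_img[OF Sc] by simp
    then obtain q where q: "q \<in> P" "Z #> cm G x y = Z #> q" by blast
    have qc: "q \<in> carrier G" using q Psub by blast
    have "inv q \<otimes> cm G x y \<in> Z" using rcos_eq_iff[OF Zn cm_closed[OF x y] qc] q by simp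
    moreover have "cm G x y = q \<otimes> (inv q \<otimes> cm G x y)" using qc x y by simp
    ultimately show ?thesis using Hmem q(1) by blast
  qed
  have key: "H \<subseteq> cent G K"
    if K: "K \<lhd> G" and MsK: "M \<subseteq> K"
      and L: "\<And>h g g'. h \<in> H \<Longrightarrow> g \<in> carrier G \<Longrightarrow> g' \<in> carrier G \<Longrightarrow> cm G (cm G h g) g' \<in> K"
    for K
  proof -
    have csub: "subgroup (cent G K) G" using cent_normal(1)[OF K] normal_imp_subgroup by blast
    have "S \<subseteq> cent G K"
    proof
      fix s assume "s \<in> S"
      then obtain x where x: "x \<in> carrier G" "s = x [^] p" unfolding S_def by blast
      have MK': "h [^] p \<in> K" if "h \<in> H" for h using MK[OF that] MsK by blast
      have "cm G (x [^] p) g \<in> K" if g: "g \<in> carrier G" for g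
        by (rule key_step[OF K podd Hc MK' HG L x(1) g])
      then show "s \<in> cent G K" unfolding cent_def using x by simp
    qed
    then have PK: "P \<subseteq> cent G K" unfolding PS by (rule generate_subgroup_incl[OF _ csub])
    have ZK: "Z \<subseteq> cent G K"
    proof
      fix z assume z: "z \<in> Z"
      have "cm G z g \<in> K" if g: "g \<in> carrier G" for g
      proof -
        have "cm G z g = \<one>" using cm_one_iff[OF Zc(1)[OF z] g] Zc(2)[OF z g] by simp
        then show ?thesis using subgroup.one_closed[OF normal_imp_subgroup[OF K]] by simp
      qed
      then show "z \<in> cent G K" unfolding cent_def using Zc(1)[OF z] by simp
    qed
    show ?thesis
    proof
      fix h assume "h \<in> H"
      then obtain q z where "q \<in> P" "z \<in> Z" "h = q \<otimes> z" using Hmem by blast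
      then show "h \<in> cent G K" using PK ZK subgroup.m_closed[OF csub] by blast
    qed
  qed
  define Zs where "Zs i = (cent G ^^ i) M" for i
  have Zs0: "Zs 0 = M" unfolding Zs_def by simp
  have ZsS: "Zs (Suc i) = cent G (Zs i)" for i unfolding Zs_def by simp
  have Zsn: "Zs i \<lhd> G" for i
  proof (induction i)
    case 0 then show ?case using Mn Zs0 by simp
  next
    case (Suc i) then show ?case using cent_normal(1)[OF Suc.IH] ZsS[of i] by simp
  qed
  have ZsM: "M \<subseteq> Zs i" for i
  proof (induction i)
    case 0 then show ?case by (simp add: Zs0)
  next
    case (Suc i) then show ?case using cent_normal(2)[OF Zsn[of i]] ZsS by blast
  qed
  have Zsc: "Zs i \<subseteq> carrier G" for i using Zsn normal_imp_subgroup subgroup.subset by blast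
  have grow: "Zs i = carrier G \<or> i < card (Zs i)" for i
  proof (induction i)
    case 0
    have "\<one> \<in> M" using Mn normal_imp_subgroup subgroup.one_closed by blast
    moreover have "finite M" using finite_subset[OF Zsc[of 0] fin] Zs0 by simp
    ultimately have "card M \<noteq> 0" by auto
    then show ?case using Zs0 by simp
  next
    case (Suc i)
    show ?case
    proof (cases "Zs i = carrier G")
      case True
      have "carrier G \<subseteq> Zs (Suc i)" using cent_normal(2)[OF Zsn[of i]] True ZsS by simp
      then show ?thesis using Zsc[of "Suc i"] by blast
    next
      case False
      then have lt: "i < card (Zs i)" using Suc by simp
      obtain x where x: "x \<in> carrier G" "x \<notin> Zs i" "\<forall>g\<in>carrier G. inv x \<otimes> inv g \<otimes> x \<otimes> g \<in> Zs i"
        using pgroup_fixed[OF fin ord pr Zsn False] by blast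
      have "x \<in> Zs (Suc i)" using x unfolding ZsS cent_def cm_def by simp
      then have "Zs i \<subset> Zs (Suc i)" using x(2) cent_normal(2)[OF Zsn[of i]] ZsS by auto
      then have "card (Zs i) < card (Zs (Suc i))"
        by (rule psubset_card_mono[OF finite_subset[OF Zsc fin]])
      then show ?thesis using lt by simp
    qed
  qed
  define N where "N = order G"
  have top: "Zs N = carrier G"
  proof (rule ccontr)
    assume "Zs N \<noteq> carrier G"
    then have "N < card (Zs N)" using grow by blast
    moreover have "card (Zs N) \<le> N" unfolding N_def order_def by (rule card_mono[OF fin Zsc])
    ultimately show False by simp
  qed
  have down: "\<forall>h\<in>H. \<forall>g\<in>carrier G. cm G h g \<in> Zs (N - k)" for k
  proof (induction k)
    case 0
    then show ?case using top Hc by auto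
  next
    case (Suc k)
    show ?case
    proof (cases "k < N")
      case True
      then have e: "N - k = Suc (N - Suc k)" by simp
      have "cm G (cm G h g) g' \<in> Zs (N - Suc k)"
        if h: "h \<in> H" and g: "g \<in> carrier G" and g': "g' \<in> carrier G" for h g g'
      proof -
        have "cm G h g \<in> Zs (Suc (N - Suc k))" using Suc.IH h g e by simp
        then have "cm G h g \<in> cent G (Zs (N - Suc k))" by (simp only: ZsS)
        then show ?thesis using g' unfolding cent_def by blast
      qed
      then have "H \<subseteq> cent G (Zs (N - Suc k))" using key[OF Zsn ZsM] by blast
      then show ?thesis unfolding cent_def by blast
    next
      case False
      then have "N - Suc k = N - k" by simp
      then show ?thesis using Suc by simp
    qed
  qed
  have fin_mem: "cm G h g \<in> M" if "h \<in> H" "g \<in> carrier G" for h g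
    using down[of N] that Zs0 by simp
  have "comm_subgroup G H (carrier G) \<subseteq> M"
    unfolding comm_subgroup_def
  proof (rule generate_subgroup_incl)
    show "{inv x \<otimes> inv y \<otimes> x \<otimes> y |x y. x \<in> H \<and> y \<in> carrier G} \<subseteq> M"
      using fin_mem unfolding cm_def by blast
    show "subgroup M G" using Mn normal_imp_subgroup by blast
  qed
  then show ?thesis unfolding powerfully_embedded_def H_def P_def Z_def M_def .
qed

end
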